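(* Let $P,R\in\mathrm{Sym}(n,\mathbb{R})$, $Q\in\mathrm{Mat}(n,\mathbb{R})$ and constants $C_1,C_2,C_3>0$ with $\langle Pv,v\rangle\ge C_1|v|^2$, $|Pv|\ge C_1|v|$, $|Qv|\le C_2|v|$, $|Rv|\le C_3|v|$ for all $v\in\mathbb{R}^n$. For $\lambda\in\mathbb{R}$ let $B_\lambda=\begin{bmatrix}P^{-1}&-P^{-1}Q\\-Q^TP^{-1}&Q^TP^{-1}Q-R-\lambda I_n\end{bmatrix}$ and $J=\begin{bmatrix}0&-I_n\\ I_n&0\end{bmatrix}$. Then $JB_\lambda$ is hyperbolic for every $\lambda>C_2^2/C_1+C_3$.
   Context: A real matrix is hyperbolic if it has no eigenvalue on the imaginary axis. *)

theory Defs
  imports "Jordan_Normal_Form.Char_Poly" "Jordan_Normal_Form.Gauss_Jordan_Elimination"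
begin

definition vnorm :: "real vec \<Rightarrow> real" where
  "vnorm v = sqrt (v \<bullet> v)"

definition mat_inv :: "real mat \<Rightarrow> real mat" where
  "mat_inv A = the (mat_inverse A)"

definition hyperbolic :: "real mat \<Rightarrow> bool" where
  "hyperbolic A \<longleftrightarrow> (\<forall>y::real. \<not> eigenvalue (map_mat complex_of_real A) (\<i> * complex_of_real y))"

definition J_mat :: "nat \<Rightarrow> real mat" where
  "J_mat n = four_block_mat (0\<^sub>m n n) (- 1\<^sub>m n) (1\<^sub>m n) (0\<^sub>m n n)"

definition B_mat :: "nat \<Rightarrow> real mat \<Rightarrow> real mat \<Rightarrow> real mat \<Rightarrow> real \<Rightarrow> real mat" where
  "B_mat n P Q R lam =
     four_block_mat (mat_inv P) (- (mat_inv P * Q))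
                    (- (transpose_mat Q * mat_inv P))
                    (transpose_mat Q * mat_inv P * Q - R - lam \<cdot>\<^sub>m 1\<^sub>m n)"

end

theory Submission
  imports Defs
begin

lemma JB_apply:
  fixes P Q R Pi :: "real mat"
  assumes P: "P \<in> carrier_mat n n" and Q: "Q \<in> carrier_mat n n" and R: "R \<in> carrier_mat n n"
    and Pi: "mat_inv P \<in> carrier_mat n n"
    and x1: "x1 \<in> carrier_vec n" and x2: "x2 \<in> carrier_vec n"
  shows "(J_mat n * B_mat n P Q R lam) *\<^sub>v (x1 @\<^sub>v x2) =
     (transpose_mat Q *\<^sub>v (mat_inv P *\<^sub>v (x1 - Q *\<^sub>v x2)) + R *\<^sub>v x2 + lam \<cdot>\<^sub>v x2)
      @\<^sub>v (mat_inv P *\<^sub>v (x1 - Q *\<^sub>v x2))"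
proof -
  let ?Pi = "mat_inv P"
  let ?D = "transpose_mat Q * ?Pi * Q - R - lam \<cdot>\<^sub>m 1\<^sub>m n"
  have D: "?D \<in> carrier_mat n n" using P Q R Pi by auto
  have J: "J_mat n \<in> carrier_mat (n+n) (n+n)" unfolding J_mat_def by auto
  have B: "B_mat n P Q R lam \<in> carrier_mat (n+n) (n+n)" unfolding B_mat_def using D Pi Q by auto
  have xa: "x1 @\<^sub>v x2 \<in> carrier_vec (n+n)" using x1 x2 by auto
  define u1 where "u1 = ?Pi *\<^sub>v x1 + (- (?Pi * Q)) *\<^sub>v x2"
  define u2 where "u2 = (- (transpose_mat Q * ?Pi)) *\<^sub>v x1 + ?D *\<^sub>v x2"
  have u1: "u1 \<in> carrier_vec n" and u2: "u2 \<in> carrier_vec n" unfolding u1_def u2_def using Pi Q D x1 x2 by auto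
  have "B_mat n P Q R lam *\<^sub>v (x1 @\<^sub>v x2) = u1 @\<^sub>v u2"
    unfolding B_mat_def u1_def u2_def
    by (rule four_block_mat_mult_vec[OF Pi _ _ D x1 x2], insert Pi Q, auto)
  moreover have "J_mat n *\<^sub>v (u1 @\<^sub>v u2) = (- u2) @\<^sub>v u1"
  proof -
    have "J_mat n *\<^sub>v (u1 @\<^sub>v u2) = (0\<^sub>m n n *\<^sub>v u1 + (- 1\<^sub>m n) *\<^sub>v u2) @\<^sub>v (1\<^sub>m n *\<^sub>v u1 + 0\<^sub>m n n *\<^sub>v u2)"
      unfolding J_mat_def by (rule four_block_mat_mult_vec[OF _ _ _ _ u1 u2], auto)
    also have "\<dots> = (- u2) @\<^sub>v u1" using u1 u2 by (intro arg_cong2[where f="(@\<^sub>v)"]; intro eq_vecI; auto)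
    finally show ?thesis .
  qed
  moreover have "u1 = mat_inv P *\<^sub>v (x1 - Q *\<^sub>v x2)"
    unfolding u1_def using Pi Q x1 x2
    by (subst mult_minus_distrib_mat_vec[OF Pi], auto intro!: eq_vecI)
  moreover have "- u2 = transpose_mat Q *\<^sub>v (mat_inv P *\<^sub>v (x1 - Q *\<^sub>v x2)) + R *\<^sub>v x2 + lam \<cdot>\<^sub>v x2"
  proof -
    have sm: "(lam \<cdot>\<^sub>m 1\<^sub>m n) *\<^sub>v x2 = lam \<cdot>\<^sub>v x2" using x2
    proof (intro eq_vecI)
      fix i assume i: "i < dim_vec (lam \<cdot>\<^sub>v x2)"
      have "(\<Sum>ia = 0..<n. lam * (if ia = i then 1 else 0) * x2 $ ia) = (\<Sum>ia = 0..<n. if ia = i then lam * x2 $ ia else 0)"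
        by (rule sum.cong, auto)
      then show "((lam \<cdot>\<^sub>m 1\<^sub>m n) *\<^sub>v x2) $ i = (lam \<cdot>\<^sub>v x2) $ i" using i x2 by (auto simp: scalar_prod_def)
    qed (insert x2, auto)
    have "?D *\<^sub>v x2 = (transpose_mat Q * ?Pi * Q - R) *\<^sub>v x2 - (lam \<cdot>\<^sub>m 1\<^sub>m n) *\<^sub>v x2"
      by (rule minus_mult_distrib_mat_vec[of _ n n], insert P Q R Pi x2, auto)
    also have "(transpose_mat Q * ?Pi * Q - R) *\<^sub>v x2 = (transpose_mat Q * ?Pi * Q) *\<^sub>v x2 - R *\<^sub>v x2"
      by (rule minus_mult_distrib_mat_vec[of _ n n], insert P Q R Pi x2, auto)
    also have "(transpose_mat Q * ?Pi * Q) *\<^sub>v x2 = transpose_mat Q *\<^sub>v (?Pi *\<^sub>v (Q *\<^sub>v x2))"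
      using Q Pi x2 by (simp add: assoc_mult_mat_vec[of _ n n _ n])
    finally have Dx: "?D *\<^sub>v x2 = transpose_mat Q *\<^sub>v (?Pi *\<^sub>v (Q *\<^sub>v x2)) - R *\<^sub>v x2 - lam \<cdot>\<^sub>v x2"
      unfolding sm .
    have Cx: "(- (transpose_mat Q * ?Pi)) *\<^sub>v x1 = - (transpose_mat Q *\<^sub>v (?Pi *\<^sub>v x1))"
      using Q Pi x1 by (simp add: assoc_mult_mat_vec[of _ n n _ n])
    have Tx: "transpose_mat Q *\<^sub>v (mat_inv P *\<^sub>v (x1 - Q *\<^sub>v x2)) =
        transpose_mat Q *\<^sub>v (?Pi *\<^sub>v x1) - transpose_mat Q *\<^sub>v (?Pi *\<^sub>v (Q *\<^sub>v x2))"
      using Q Pi x1 x2 by (simp add: mult_minus_distrib_mat_vec[of _ n n])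
    show ?thesis unfolding u2_def Dx Cx Tx using Q Pi x1 x2 R
      by (intro eq_vecI, auto)
  qed
  ultimately show ?thesis using J B xa by (simp)
qed

lemma eig_real:
  fixes A :: "real mat"
  assumes A: "A \<in> carrier_mat m m"
    and ev: "eigenvalue (map_mat complex_of_real A) (\<i> * complex_of_real y)"
  shows "\<exists>a b. a \<in> carrier_vec m \<and> b \<in> carrier_vec m \<and> (a \<noteq> 0\<^sub>v m \<or> b \<noteq> 0\<^sub>v m)
     \<and> A *\<^sub>v a = (-y) \<cdot>\<^sub>v b \<and> A *\<^sub>v b = y \<cdot>\<^sub>v a"
proof -
  from ev obtain w where w: "w \<in> carrier_vec m" "w \<noteq> 0\<^sub>v m"
     "map_mat complex_of_real A *\<^sub>v w = (\<i> * complex_of_real y) \<cdot>\<^sub>v w"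
    unfolding eigenvalue_def eigenvector_def using A by auto
  define a where "a = vec m (\<lambda>i. Re (w $ i))"
  define b where "b = vec m (\<lambda>i. Im (w $ i))"
  have a: "a \<in> carrier_vec m" and b: "b \<in> carrier_vec m" unfolding a_def b_def by auto
  have wj: "w $ j = complex_of_real (a $ j) + \<i> * complex_of_real (b $ j)" if j: "j < m" for j
    using j by (auto simp: a_def b_def complex_eq_iff)
  have key: "(map_mat complex_of_real A *\<^sub>v w) $ i = complex_of_real ((A *\<^sub>v a) $ i) + \<i> * complex_of_real ((A *\<^sub>v b) $ i)"
    if i: "i < m" for i
  proof -
    have "(map_mat complex_of_real A *\<^sub>v w) $ i = (\<Sum>j=0..<m. complex_of_real (A $$ (i,j)) * w $ j)"
      using A w(1) i by (auto simp: scalar_prod_def)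
    also have "\<dots> = (\<Sum>j=0..<m. complex_of_real (A $$ (i,j) * a $ j) + \<i> * complex_of_real (A$$(i,j) * b$j))"
      by (rule sum.cong, auto simp: wj algebra_simps)
    also have "\<dots> = complex_of_real ((A *\<^sub>v a) $ i) + \<i> * complex_of_real ((A *\<^sub>v b) $ i)"
      using A i a b by (simp add: scalar_prod_def sum.distrib sum_distrib_left)
    finally show ?thesis .
  qed
  have e1: "A *\<^sub>v a = (-y) \<cdot>\<^sub>v b" and e2: "A *\<^sub>v b = y \<cdot>\<^sub>v a"
  proof -
    have "\<And>i. i < m \<Longrightarrow> (A *\<^sub>v a) $ i = - y * b $ i \<and> (A *\<^sub>v b) $ i = y * a $ i"
    proof -
      fix i assume i: "i < m"
      have "complex_of_real ((A *\<^sub>v a) $ i) + \<i> * complex_of_real ((A *\<^sub>v b) $ i) =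
         (\<i> * complex_of_real y) * (complex_of_real (a $ i) + \<i> * complex_of_real (b $ i))"
        using key[OF i] w(3) i w(1) wj[OF i] by (metis index_smult_vec(1) carrier_vecD)
      then show "(A *\<^sub>v a) $ i = - y * b $ i \<and> (A *\<^sub>v b) $ i = y * a $ i"
        by (auto simp: complex_eq_iff algebra_simps)
    qed
    then show "A *\<^sub>v a = (-y) \<cdot>\<^sub>v b" "A *\<^sub>v b = y \<cdot>\<^sub>v a"
      using A a b by (auto intro!: eq_vecI)
  qed
  have "a \<noteq> 0\<^sub>v m \<or> b \<noteq> 0\<^sub>v m"
  proof (rule ccontr)
    assume "\<not> ?thesis"
    then have "a = 0\<^sub>v m" "b = 0\<^sub>v m" by auto
    then have "w = 0\<^sub>v m" using w(1) by (intro eq_vecI, auto simp: wj)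
    with w(2) show False by simp
  qed
  with a b e1 e2 show ?thesis by blast
qed

lemma two_abs_le: fixes u v t :: real assumes t: "t > 0"
  shows "2 * \<bar>u * v\<bar> \<le> t * (u * u) + (v * v) / t"
proof -
  have "0 \<le> (t * \<bar>u\<bar> - \<bar>v\<bar>)^2 / t" using t by auto
  also have "\<dots> = t * (u * u) + (v * v) / t - 2 * \<bar>u * v\<bar>" using t
    by (simp add: field_simps power2_eq_square abs_mult)
  finally show ?thesis by simp
qed

lemma two_sp_le: fixes x y :: "real vec" assumes d: "dim_vec x = dim_vec y" and t: "t > 0"
  shows "2 * \<bar>x \<bullet> y\<bar> \<le> t * (x \<bullet> x) + (y \<bullet> y) / t"
proof -
  have "2 * \<bar>x \<bullet> y\<bar> \<le> 2 * (\<Sum>i=0..<dim_vec y. \<bar>x $ i * y $ i\<bar>)"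
    unfolding scalar_prod_def by simp
  also have "\<dots> = (\<Sum>i=0..<dim_vec y. 2 * \<bar>x $ i * y $ i\<bar>)" by (simp add: sum_distrib_left)
  also have "\<dots> \<le> (\<Sum>i=0..<dim_vec y. t * (x $ i * x $ i) + (y $ i * y $ i) / t)"
    by (rule sum_mono, rule two_abs_le[OF t])
  also have "\<dots> = t * (x \<bullet> x) + (y \<bullet> y) / t"
    unfolding scalar_prod_def d by (simp add: sum.distrib sum_distrib_left sum_divide_distrib)
  finally show ?thesis .
qed

lemma sp_self_nonneg: fixes x :: "real vec" shows "x \<bullet> x \<ge> 0"
  unfolding scalar_prod_def by (rule sum_nonneg, auto)

lemma sp_self_zero: fixes x :: "real vec" assumes "x \<in> carrier_vec n" "x \<bullet> x = 0" shows "x = 0\<^sub>v n"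
proof -
  have "\<forall>i\<in>{0..<dim_vec x}. x $ i * x $ i = 0"
    using assms(2) unfolding scalar_prod_def by (subst sum_nonneg_eq_0_iff[symmetric], auto)
  then show ?thesis using assms(1) by (auto intro!: eq_vecI)
qed

lemma vnorm_sq: "(vnorm x)\<^sup>2 = x \<bullet> x"
  unfolding vnorm_def using sp_self_nonneg[of x] by simp

lemma vnorm_bd_sq: assumes "vnorm u \<le> c * vnorm v" "c > 0" shows "u \<bullet> u \<le> c^2 * (v \<bullet> v)"
proof -
  have "(vnorm u)\<^sup>2 \<le> (c * vnorm v)\<^sup>2"
    by (rule power_mono[OF assms(1)], simp add: vnorm_def sp_self_nonneg)
  then show ?thesis by (simp add: vnorm_sq power_mult_distrib)
qed


lemma bd_helper: fixes c r X s :: real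
  assumes c: "c > 0" and h: "2 * \<bar>r\<bar> \<le> (1/c) * X + s' / (1/c)" and X: "X \<le> c^2 * s"
  shows "2 * \<bar>r\<bar> \<le> c * s + c * s'"
proof -
  have "(1/c) * X \<le> (1/c) * (c^2 * s)" by (rule mult_left_mono[OF X], insert c, auto)
  moreover have "(1/c) * (c^2 * s) = c * s" using c by (simp add: power2_eq_square)
  moreover have "s' / (1/c) = c * s'" by simp
  ultimately show ?thesis using h by linarith
qed

lemma smult_append: "k \<cdot>\<^sub>v (u @\<^sub>v v) = (k \<cdot>\<^sub>v u) @\<^sub>v (k \<cdot>\<^sub>v (v :: real vec))"
  by (intro eq_vecI, auto)

theorem corollary2p4:
  fixes n :: nat and P Q R :: "real mat" and C1 C2 C3 :: real
  assumes P: "P \<in> carrier_mat n n" and Psym: "transpose_mat P = P"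
      and Q: "Q \<in> carrier_mat n n"
      and R: "R \<in> carrier_mat n n" and Rsym: "transpose_mat R = R"
      and C: "C1 > 0" "C2 > 0" "C3 > 0"
      and coerc: "\<And>v. v \<in> carrier_vec n \<Longrightarrow> (P *\<^sub>v v) \<bullet> v \<ge> C1 * (vnorm v)\<^sup>2"
      and Plow: "\<And>v. v \<in> carrier_vec n \<Longrightarrow> vnorm (P *\<^sub>v v) \<ge> C1 * vnorm v"
      and Qbd: "\<And>v. v \<in> carrier_vec n \<Longrightarrow> vnorm (Q *\<^sub>v v) \<le> C2 * vnorm v"
      and Rbd: "\<And>v. v \<in> carrier_vec n \<Longrightarrow> vnorm (R *\<^sub>v v) \<le> C3 * vnorm v"
  shows "\<forall>lam::real. lam > C2\<^sup>2 / C1 + C3 \<longrightarrow> hyperbolic (J_mat n * B_mat n P Q R lam)"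
proof (intro allI impI)
  fix lam :: real assume lam: "lam > C2\<^sup>2 / C1 + C3"
  define Pi where "Pi = mat_inv P"
  have "det P \<noteq> 0"
  proof
    assume "det P = 0"
    then obtain v where v: "v \<in> carrier_vec n" "v \<noteq> 0\<^sub>v n" "P *\<^sub>v v = 0\<^sub>v n"
      using det_0_iff_vec_prod_zero[OF P] by auto
    have "C1 * (v \<bullet> v) \<le> 0" using coerc[OF v(1)] v by (simp add: vnorm_sq)
    then have "v \<bullet> v \<le> 0" using C(1) by (simp add: mult_le_0_iff)
    then have "v \<bullet> v = 0" using sp_self_nonneg[of v] by linarith
    with sp_self_zero[OF v(1)] v(2) show False by simp
  qed
  then have "P \<in> Units (ring_mat TYPE(real) n undefined)" by (rule det_non_zero_imp_unit[OF P])
  then obtain Pi' where "mat_inverse P = Some Pi'" using mat_inverse(1)[OF P] by fastforce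
  then have Pinv: "P * Pi = 1\<^sub>m n" and Pi: "Pi \<in> carrier_mat n n"
    using mat_inverse(2)[OF P] unfolding Pi_def mat_inv_def by auto
  have PPi: "P *\<^sub>v (Pi *\<^sub>v v) = v" if "v \<in> carrier_vec n" for v
    using that P Pi by (simp add: assoc_mult_mat_vec[symmetric, of _ n n _ n] Pinv)
  let ?A = "J_mat n * B_mat n P Q R lam"
  have J: "J_mat n \<in> carrier_mat (n+n) (n+n)" unfolding J_mat_def by auto
  have B: "B_mat n P Q R lam \<in> carrier_mat (n+n) (n+n)" unfolding B_mat_def using Q R Pi[unfolded Pi_def] by auto
  have A: "?A \<in> carrier_mat (n+n) (n+n)" using J B by auto
  show "hyperbolic ?A"
    unfolding hyperbolic_def
  proof (intro allI notI)
    fix y :: real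
    assume "eigenvalue (map_mat complex_of_real ?A) (\<i> * complex_of_real y)"
    from eig_real[OF A this] obtain a b where a: "a \<in> carrier_vec (n+n)" and b: "b \<in> carrier_vec (n+n)"
      and nz: "a \<noteq> 0\<^sub>v (n+n) \<or> b \<noteq> 0\<^sub>v (n+n)" and ea: "?A *\<^sub>v a = (-y) \<cdot>\<^sub>v b" and eb: "?A *\<^sub>v b = y \<cdot>\<^sub>v a"
      by blast
    define a1 where "a1 = vec_first a n"
    define a2 where "a2 = vec_last a n"
    define b1 where "b1 = vec_first b n"
    define b2 where "b2 = vec_last b n"
    have c: "a1 \<in> carrier_vec n" "a2 \<in> carrier_vec n" "b1 \<in> carrier_vec n" "b2 \<in> carrier_vec n"
      unfolding a1_def a2_def b1_def b2_def by auto
    have aa: "a = a1 @\<^sub>v a2" unfolding a1_def a2_def using a by simp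
    have bb: "b = b1 @\<^sub>v b2" unfolding b1_def b2_def using b by simp
    define za where "za = Pi *\<^sub>v (a1 - Q *\<^sub>v a2)"
    define zb where "zb = Pi *\<^sub>v (b1 - Q *\<^sub>v b2)"
    have cz: "za \<in> carrier_vec n" "zb \<in> carrier_vec n" unfolding za_def zb_def using Pi c Q by (auto intro!: mult_mat_vec_carrier)
    have "(transpose_mat Q *\<^sub>v za + R *\<^sub>v a2 + lam \<cdot>\<^sub>v a2) @\<^sub>v za = ((-y) \<cdot>\<^sub>v b1) @\<^sub>v ((-y) \<cdot>\<^sub>v b2)"
      using ea unfolding aa bb smult_append za_def Pi_def
      using JB_apply[OF P Q R Pi[unfolded Pi_def] c(1,2)] by simp
    moreover have "transpose_mat Q *\<^sub>v za + R *\<^sub>v a2 + lam \<cdot>\<^sub>v a2 \<in> carrier_vec n"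
      using c cz Q R by (auto intro!: mult_mat_vec_carrier)
    ultimately have E2: "transpose_mat Q *\<^sub>v za + R *\<^sub>v a2 + lam \<cdot>\<^sub>v a2 = (-y) \<cdot>\<^sub>v b1" and E1: "za = (-y) \<cdot>\<^sub>v b2"
      using append_vec_eq c by auto
    have "(transpose_mat Q *\<^sub>v zb + R *\<^sub>v b2 + lam \<cdot>\<^sub>v b2) @\<^sub>v zb = (y \<cdot>\<^sub>v a1) @\<^sub>v (y \<cdot>\<^sub>v a2)"
      using eb unfolding aa bb smult_append zb_def Pi_def
      using JB_apply[OF P Q R Pi[unfolded Pi_def] c(3,4)] by simp
    moreover have "transpose_mat Q *\<^sub>v zb + R *\<^sub>v b2 + lam \<cdot>\<^sub>v b2 \<in> carrier_vec n"
      using c cz Q R by (auto intro!: mult_mat_vec_carrier)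
    ultimately have E4: "transpose_mat Q *\<^sub>v zb + R *\<^sub>v b2 + lam \<cdot>\<^sub>v b2 = y \<cdot>\<^sub>v a1" and E3: "zb = y \<cdot>\<^sub>v a2"
      using append_vec_eq c by auto
    have F1: "a1 - Q *\<^sub>v a2 = (-y) \<cdot>\<^sub>v (P *\<^sub>v b2)"
    proof -
      have "a1 - Q *\<^sub>v a2 = P *\<^sub>v za" unfolding za_def using PPi c Q by auto
      also have "\<dots> = (-y) \<cdot>\<^sub>v (P *\<^sub>v b2)" unfolding E1 using mult_mat_vec[OF P c(4)] .
      finally show ?thesis .
    qed
    have F3: "b1 - Q *\<^sub>v b2 = y \<cdot>\<^sub>v (P *\<^sub>v a2)"
    proof -
      have "b1 - Q *\<^sub>v b2 = P *\<^sub>v zb" unfolding zb_def using PPi c Q by auto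
      also have "\<dots> = y \<cdot>\<^sub>v (P *\<^sub>v a2)" unfolding E3 using mult_mat_vec[OF P c(2)] .
      finally show ?thesis .
    qed
    define qab where "qab = (Q *\<^sub>v a2) \<bullet> b2"
    define qba where "qba = (Q *\<^sub>v b2) \<bullet> a2"
    define ra where "ra = (R *\<^sub>v a2) \<bullet> a2"
    define rb where "rb = (R *\<^sub>v b2) \<bullet> b2"
    define pa where "pa = (P *\<^sub>v a2) \<bullet> a2"
    define pb where "pb = (P *\<^sub>v b2) \<bullet> b2"
    define sa where "sa = a2 \<bullet> a2"
    define sb where "sb = b2 \<bullet> b2"
    have S1: "- y * qab + ra + lam * sa = - y * (qba + y * pa)"
    proof -
      have "(transpose_mat Q *\<^sub>v za + R *\<^sub>v a2 + lam \<cdot>\<^sub>v a2) \<bullet> a2 = ((-y) \<cdot>\<^sub>v b1) \<bullet> a2" using E2 by simp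
      moreover have "(transpose_mat Q *\<^sub>v za) \<bullet> a2 = za \<bullet> (Q *\<^sub>v a2)"
        by (rule transpose_vec_mult_scalar[OF Q c(2) cz(1)])
      moreover have "za \<bullet> (Q *\<^sub>v a2) = - y * qab"
        unfolding E1 qab_def using c Q by (simp add: comm_scalar_prod[of b2 n])
      moreover have "(b1 - Q *\<^sub>v b2) \<bullet> a2 = (y \<cdot>\<^sub>v (P *\<^sub>v a2)) \<bullet> a2" using F3 by simp
      ultimately show ?thesis using c cz Q R P
        by (simp add: add_scalar_prod_distrib[of _ n] minus_scalar_prod_distrib[of _ n] qba_def ra_def pa_def sa_def algebra_simps)
    qed
    have S2: "y * qba + rb + lam * sb = y * (qab - y * pb)"
    proof -
      have "(transpose_mat Q *\<^sub>v zb + R *\<^sub>v b2 + lam \<cdot>\<^sub>v b2) \<bullet> b2 = (y \<cdot>\<^sub>v a1) \<bullet> b2" using E4 by simp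
      moreover have "(transpose_mat Q *\<^sub>v zb) \<bullet> b2 = zb \<bullet> (Q *\<^sub>v b2)"
        by (rule transpose_vec_mult_scalar[OF Q c(4) cz(2)])
      moreover have "zb \<bullet> (Q *\<^sub>v b2) = y * qba"
        unfolding E3 qba_def using c Q by (simp add: comm_scalar_prod[of a2 n])
      moreover have "(a1 - Q *\<^sub>v a2) \<bullet> b2 = ((-y) \<cdot>\<^sub>v (P *\<^sub>v b2)) \<bullet> b2" using F1 by simp
      then have "a1 \<bullet> b2 = qab - y * pb" using c P Q
        by (simp add: minus_scalar_prod_distrib[of _ n] qab_def pb_def)
      ultimately show ?thesis using c cz Q R P
        by (simp add: add_scalar_prod_distrib[of _ n] minus_scalar_prod_distrib[of _ n] qab_def rb_def pb_def sb_def algebra_simps)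
    qed
    have sa0: "sa \<ge> 0" and sb0: "sb \<ge> 0" unfolding sa_def sb_def by (auto simp: sp_self_nonneg)
    have pa: "pa \<ge> C1 * sa" using coerc[OF c(2)] unfolding pa_def sa_def by (simp add: vnorm_sq)
    have pb: "pb \<ge> C1 * sb" using coerc[OF c(4)] unfolding pb_def sb_def by (simp add: vnorm_sq)
    have ra: "2 * \<bar>ra\<bar> \<le> C3 * sa + C3 * sa"
    proof -
      have "2 * \<bar>ra\<bar> \<le> (1/C3) * ((R *\<^sub>v a2) \<bullet> (R *\<^sub>v a2)) + sa / (1/C3)"
        unfolding ra_def sa_def by (rule two_sp_le, insert c R C, auto)
      moreover have "(R *\<^sub>v a2) \<bullet> (R *\<^sub>v a2) \<le> C3^2 * sa" unfolding sa_def
        by (rule vnorm_bd_sq[OF Rbd[OF c(2)] C(3)])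
      ultimately show ?thesis using C(3)
        by (metis bd_helper)
    qed
    have rb: "2 * \<bar>rb\<bar> \<le> C3 * sb + C3 * sb"
    proof -
      have "2 * \<bar>rb\<bar> \<le> (1/C3) * ((R *\<^sub>v b2) \<bullet> (R *\<^sub>v b2)) + sb / (1/C3)"
        unfolding rb_def sb_def by (rule two_sp_le, insert c R C, auto)
      moreover have "(R *\<^sub>v b2) \<bullet> (R *\<^sub>v b2) \<le> C3^2 * sb" unfolding sb_def
        by (rule vnorm_bd_sq[OF Rbd[OF c(4)] C(3)])
      ultimately show ?thesis using C(3)
        by (metis bd_helper)
    qed
    have qab: "2 * \<bar>qab\<bar> \<le> C2 * sa + C2 * sb"
    proof -
      have "2 * \<bar>qab\<bar> \<le> (1/C2) * ((Q *\<^sub>v a2) \<bullet> (Q *\<^sub>v a2)) + sb / (1/C2)"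
        unfolding qab_def sb_def by (rule two_sp_le, insert c Q C, auto)
      moreover have "(Q *\<^sub>v a2) \<bullet> (Q *\<^sub>v a2) \<le> C2^2 * sa" unfolding sa_def
        by (rule vnorm_bd_sq[OF Qbd[OF c(2)] C(2)])
      ultimately show ?thesis using C(2)
        by (metis bd_helper)
    qed
    have qba: "2 * \<bar>qba\<bar> \<le> C2 * sa + C2 * sb"
    proof -
      have "2 * \<bar>qba\<bar> \<le> (1/C2) * ((Q *\<^sub>v b2) \<bullet> (Q *\<^sub>v b2)) + sa / (1/C2)"
        unfolding qba_def sa_def by (rule two_sp_le, insert c Q C, auto)
      moreover have "(Q *\<^sub>v b2) \<bullet> (Q *\<^sub>v b2) \<le> C2^2 * sb" unfolding sb_def
        by (rule vnorm_bd_sq[OF Qbd[OF c(4)] C(2)])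
      ultimately show ?thesis using C(2)
        by (metis bd_helper add.commute)
    qed
    define s where "s = sa + sb"
    have s0: "s \<ge> 0" using sa0 sb0 s_def by simp
    have sum: "ra + rb + lam * s + y^2 * (pa + pb) = 2 * y * (qab - qba)"
      using S1 S2 unfolding s_def by (simp add: algebra_simps power2_eq_square)
    have low: "(lam - C3) * s + C1 * y^2 * s \<le> ra + rb + lam * s + y^2 * (pa + pb)"
    proof -
      have "y^2 * (C1 * s) \<le> y^2 * (pa + pb)" using pa pb s_def by (intro mult_left_mono, auto simp: algebra_simps)
      moreover have "- C3 * s \<le> ra + rb" using ra rb s_def by (auto simp: algebra_simps)
      ultimately show ?thesis by (simp add: algebra_simps)
    qed
    have up: "2 * y * (qab - qba) \<le> 2 * \<bar>y\<bar> * C2 * s"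
    proof -
      have "y * (qab - qba) \<le> \<bar>y\<bar> * \<bar>qab - qba\<bar>" by (metis abs_ge_self abs_mult)
      also have "\<dots> \<le> \<bar>y\<bar> * (\<bar>qab\<bar> + \<bar>qba\<bar>)" by (rule mult_left_mono[OF abs_triangle_ineq4], simp)
      finally have "2 * y * (qab - qba) \<le> \<bar>y\<bar> * (2 * \<bar>qab\<bar> + 2 * \<bar>qba\<bar>)" by (simp add: algebra_simps)
      also have "\<dots> \<le> \<bar>y\<bar> * (2 * C2 * s)"
      proof (rule mult_left_mono)
        have "2 * C2 * s = (C2 * sa + C2 * sb) + (C2 * sa + C2 * sb)" unfolding s_def by (simp add: algebra_simps)
        then show "2 * \<bar>qab\<bar> + 2 * \<bar>qba\<bar> \<le> 2 * C2 * s" using qab qba by linarith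
      qed simp
      finally show ?thesis by (simp add: algebra_simps)
    qed
    have coef: "lam - C3 + C1 * y^2 - 2 * \<bar>y\<bar> * C2 > 0"
    proof -
      have "C1 * (lam - C3) > C2^2" using lam C(1) by (simp add: field_simps)
      moreover have "0 \<le> (C1 * \<bar>y\<bar> - C2)^2" by simp
      moreover have "C1 * (lam - C3 + C1 * y^2 - 2 * \<bar>y\<bar> * C2) = (C1 * (lam - C3) - C2^2) + (C1 * \<bar>y\<bar> - C2)^2"
        by (simp add: power2_eq_square algebra_simps abs_mult_self_eq)
      ultimately have "C1 * (lam - C3 + C1 * y^2 - 2 * \<bar>y\<bar> * C2) > 0" by linarith
      then show ?thesis using C(1) by (simp add: zero_less_mult_iff)
    qed
    have "(lam - C3 + C1 * y^2 - 2 * \<bar>y\<bar> * C2) * s \<le> 0"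
      using low sum up by (simp add: algebra_simps)
    then have "s = 0" using coef s0 by (simp add: mult_le_0_iff)
    then have "sa = 0" "sb = 0" using sa0 sb0 s_def by auto
    then have a20: "a2 = 0\<^sub>v n" and b20: "b2 = 0\<^sub>v n" using sp_self_zero c unfolding sa_def sb_def by auto
    have z1: "Q *\<^sub>v 0\<^sub>v n = 0\<^sub>v n" "P *\<^sub>v 0\<^sub>v n = 0\<^sub>v n" using P Q by (auto intro!: eq_vecI)
    have "a1 = 0\<^sub>v n" using F1 c unfolding a20 b20 z1 by (auto intro!: eq_vecI dest!: arg_cong[where f="\<lambda>v. v $ _"])
    moreover have "b1 = 0\<^sub>v n" using F3 c unfolding a20 b20 z1 by (auto intro!: eq_vecI dest!: arg_cong[where f="\<lambda>v. v $ _"])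
    ultimately show False using nz aa bb a20 b20 by auto
  qed
qed

end
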